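(* Let $n\ge1$, $y\in\mathbb{R}^n$, $\lambda\ge0$, and let $\hat\theta^{(\lambda)}=\operatorname{argmin}_{\theta\in\mathbb{R}^n}\frac12\sum_{i=1}^n(y_i-\theta_i)^2+\lambda\sum_{i=1}^{n-1}|\theta_{i+1}-\theta_i|$ be the Fused Lasso estimator. Then $$\max_{j\le n}\ \min_{j\le i\le n}\Big[\overline{y}_{[i:n]}+\frac{C_{i,j}\lambda}{n-i+1}\Big]\le\hat\theta^{(\lambda)}_n\le\min_{j\le n}\ \max_{j\le i\le n}\Big[\overline{y}_{[i:n]}-\frac{C_{i,j}\lambda}{n-i+1}\Big],$$ where $j,i$ range over $[n]$, $C_{i,j}=1$ if $i>j$ and $C_{i,j}=-1$ if $i=j$.
   Context: $[n]=\{1,\dots,n\}$, $[i:n]=\{i,\dots,n\}$, and $\overline{y}_{[i:n]}$ is the average of $y_i,\dots,y_n$. *)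

theory Defs
  imports Complex_Main
begin

text \<open>Vectors in R^n are represented as functions nat => real, using indices 1..n.\<close>

definition fused_lasso_obj :: "nat \<Rightarrow> real \<Rightarrow> (nat \<Rightarrow> real) \<Rightarrow> (nat \<Rightarrow> real) \<Rightarrow> real" where
  "fused_lasso_obj n lam y theta =
     (1/2) * (\<Sum>i=1..n. (y i - theta i)^2) + lam * (\<Sum>i=1..n-1. \<bar>theta (Suc i) - theta i\<bar>)"

definition is_fused_lasso :: "nat \<Rightarrow> real \<Rightarrow> (nat \<Rightarrow> real) \<Rightarrow> (nat \<Rightarrow> real) \<Rightarrow> bool" where
  "is_fused_lasso n lam y theta \<longleftrightarrow>
     (\<forall>theta'. fused_lasso_obj n lam y theta \<le> fused_lasso_obj n lam y theta')"

definition avg :: "(nat \<Rightarrow> real) \<Rightarrow> nat \<Rightarrow> nat \<Rightarrow> real" where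
  "avg y i n = (\<Sum>k=i..n. y k) / real (n - i + 1)"

definition Cij :: "nat \<Rightarrow> nat \<Rightarrow> real" where
  "Cij i j = (if i > j then 1 else if i = j then -1 else 0)"

end

theory Submission
  imports Defs
begin

lemma shift_diff:
  fixes theta y :: "nat \<Rightarrow> real"
  assumes "1 \<le> i" "i \<le> n"
  shows "fused_lasso_obj n lam y (\<lambda>k. theta k + (if i \<le> k then e else 0)) - fused_lasso_obj n lam y theta
     = e * (\<Sum>k=i..n. theta k - y k) + real (n-i+1) * e^2/2
       + (if 2 \<le> i then lam * (\<bar>theta i - theta (i-1) + e\<bar> - \<bar>theta i - theta (i-1)\<bar>) else 0)"
proof -
  define th' where "th' = (\<lambda>k. theta k + (if i \<le> k then e else 0))"
  have "(\<Sum>k=1..n. (y k - th' k)^2) - (\<Sum>k=1..n. (y k - theta k)^2)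
      = (\<Sum>k=1..n. (if i \<le> k then 2*e*(theta k - y k) + e^2 else 0))"
    unfolding sum_subtractf[symmetric]
    by (rule sum.cong) (auto simp: th'_def power2_eq_square algebra_simps)
  also have "\<dots> = (\<Sum>k\<in>{k\<in>{1..n}. i \<le> k}. 2*e*(theta k - y k) + e^2)"
    by (rule sum.inter_filter[symmetric]) simp
  also have "{k\<in>{1..n}. i \<le> k} = {i..n}" using assms by auto
  also have "(\<Sum>k=i..n. 2*e*(theta k - y k) + e^2) = 2*e*(\<Sum>k=i..n. theta k - y k) + real (n-i+1) * e^2"
    using assms by (simp add: sum.distrib sum_distrib_left)
  finally have sq: "(\<Sum>k=1..n. (y k - th' k)^2) - (\<Sum>k=1..n. (y k - theta k)^2) = 2*e*(\<Sum>k=i..n. theta k - y k) + real (n-i+1) * e^2" .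
  have "(\<Sum>k=1..n-1. \<bar>th' (Suc k) - th' k\<bar>) - (\<Sum>k=1..n-1. \<bar>theta (Suc k) - theta k\<bar>)
      = (\<Sum>k=1..n-1. (if k = i - 1 then \<bar>theta (Suc k) - theta k + e\<bar> - \<bar>theta (Suc k) - theta k\<bar> else 0))"
    unfolding sum_subtractf[symmetric]
    apply (rule sum.cong, simp)
    using assms by (auto simp: th'_def)
  also have "\<dots> = (if 2 \<le> i then \<bar>theta i - theta (i-1) + e\<bar> - \<bar>theta i - theta (i-1)\<bar> else 0)"
    using assms by (auto simp: sum.delta)
  finally have tv: "(\<Sum>k=1..n-1. \<bar>th' (Suc k) - th' k\<bar>) - (\<Sum>k=1..n-1. \<bar>theta (Suc k) - theta k\<bar>) = (if 2 \<le> i then \<bar>theta i - theta (i-1) + e\<bar> - \<bar>theta i - theta (i-1)\<bar> else 0)" .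
  show ?thesis
    unfolding th'_def[symmetric] fused_lasso_obj_def
    using sq tv by (auto simp: algebra_simps split: if_splits)
qed

lemma opt_ineq:
  fixes theta y :: "nat \<Rightarrow> real"
  assumes "is_fused_lasso n lam y theta" "1 \<le> i" "i \<le> n"
  shows "0 \<le> e * (\<Sum>k=i..n. theta k - y k) + real (n-i+1) * e^2/2
       + (if 2 \<le> i then lam * (\<bar>theta i - theta (i-1) + e\<bar> - \<bar>theta i - theta (i-1)\<bar>) else 0)"
  using shift_diff[OF assms(2,3), of lam y theta e] assms(1)
  unfolding is_fused_lasso_def
  by (metis diff_ge_0_iff_ge)

lemma real_aux_a:
  fixes g m lam :: real
  assumes m: "m > 0" and lam: "lam \<ge> 0"
    and H: "\<And>e. 0 \<le> e * g + m * e^2/2 + lam * \<bar>e\<bar>"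
  shows "g \<le> lam \<and> -lam \<le> g"
proof (rule conjI; rule ccontr)
  assume "\<not> g \<le> lam"
  define t where "t = (g - lam)/m"
  have t: "t > 0" "m * t = g - lam" using m \<open>\<not> g \<le> lam\<close> by (auto simp: t_def)
  have "0 \<le> (-t) * g + m * (-t)^2/2 + lam * \<bar>-t\<bar>" by (rule H)
  also have "\<dots> = t * (lam - g + m*t/2)" using t by (simp add: power2_eq_square algebra_simps)
  also have "\<dots> = t * (-(g-lam)/2)" proof - have "lam - g + m*t/2 = -(g-lam)/2 + (lam - g + m*t)/2" by (simp add: field_simps) then show ?thesis using t(2) by simp qed
  also have "\<dots> < 0" using t \<open>\<not> g \<le> lam\<close> by (simp add: mult_pos_neg)
  finally show False by simp
next
  assume "\<not> -lam \<le> g"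
  define t where "t = (-g - lam)/m"
  have t: "t > 0" "m * t = -g - lam" using m \<open>\<not> -lam \<le> g\<close> by (auto simp: t_def)
  have "0 \<le> t * g + m * t^2/2 + lam * \<bar>t\<bar>" by (rule H)
  also have "\<dots> = t * (lam + g + m*t/2)" using t by (simp add: power2_eq_square algebra_simps)
  also have "\<dots> = t * ((g+lam)/2)" proof - have "lam + g + m*t/2 = (g+lam)/2 + (g + lam + m*t)/2" by (simp add: field_simps) then show ?thesis using t(2) by simp qed
  also have "\<dots> < 0" using t \<open>\<not> -lam \<le> g\<close> by (simp add: mult_pos_neg)
  finally show False by simp
qed

lemma real_aux_b:
  fixes g m lam d :: real
  assumes m: "m > 0" and d: "d < 0"
    and H: "\<And>e. 0 \<le> e * g + m * e^2/2 + lam * (\<bar>d + e\<bar> - \<bar>d\<bar>)"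
  shows "lam \<le> g"
proof (rule ccontr)
  assume A: "\<not> lam \<le> g"
  define t where "t = min (-d) ((lam - g)/m)"
  have t: "t > 0" "m * t \<le> lam - g" "d + t \<le> 0" using m A d
    by (auto simp: t_def min_def field_simps)
  have "0 \<le> t * g + m * t^2/2 + lam * (\<bar>d + t\<bar> - \<bar>d\<bar>)" by (rule H)
  also have "\<dots> = t * (g - lam + m*t/2)" using t d by (simp add: power2_eq_square algebra_simps)
  also have "\<dots> < 0" using t A by (intro mult_pos_neg) auto
  finally show False by simp
qed

lemma real_aux_c:
  fixes g m lam d :: real
  assumes m: "m > 0" and d: "d > 0"
    and H: "\<And>e. 0 \<le> e * g + m * e^2/2 + lam * (\<bar>d + e\<bar> - \<bar>d\<bar>)"
  shows "g \<le> -lam"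
proof (rule ccontr)
  assume A: "\<not> g \<le> -lam"
  define t where "t = min d ((g + lam)/m)"
  have t: "t > 0" "m * t \<le> g + lam" "d - t \<ge> 0" using m A d
    by (auto simp: t_def min_def field_simps)
  have "0 \<le> (-t) * g + m * (-t)^2/2 + lam * (\<bar>d + -t\<bar> - \<bar>d\<bar>)" by (rule H)
  also have "\<dots> = t * (-g - lam + m*t/2)" using t d by (simp add: power2_eq_square algebra_simps)
  also have "\<dots> < 0" using t A by (intro mult_pos_neg) auto
  finally show False by simp
qed

lemma g_bounds:
  fixes theta y :: "nat \<Rightarrow> real"
  assumes "is_fused_lasso n lam y theta" "lam \<ge> 0" "1 \<le> i" "i \<le> n"
  shows "(\<Sum>k=i..n. theta k - y k) \<le> lam \<and> -lam \<le> (\<Sum>k=i..n. theta k - y k)"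
proof (rule real_aux_a[where m="real (n-i+1)"])
  fix e :: real
  have "(if 2 \<le> i then lam * (\<bar>theta i - theta (i-1) + e\<bar> - \<bar>theta i - theta (i-1)\<bar>) else 0) \<le> lam * \<bar>e\<bar>"
    using assms(2) by (auto intro!: mult_left_mono)
  then show "0 \<le> e * (\<Sum>k=i..n. theta k - y k) + real (n-i+1) * e^2/2 + lam * \<bar>e\<bar>"
    using opt_ineq[OF assms(1,3,4), of e] by linarith
qed (use assms in auto)

lemma g_down:
  fixes theta y :: "nat \<Rightarrow> real"
  assumes "is_fused_lasso n lam y theta" "2 \<le> i" "i \<le> n" "theta i < theta (i-1)"
  shows "lam \<le> (\<Sum>k=i..n. theta k - y k)"
proof (rule real_aux_b[where m="real (n-i+1)" and d="theta i - theta (i-1)"])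
  fix e :: real
  show "0 \<le> e * (\<Sum>k=i..n. theta k - y k) + real (n-i+1) * e^2/2 + lam * (\<bar>theta i - theta (i-1) + e\<bar> - \<bar>theta i - theta (i-1)\<bar>)"
    using opt_ineq[OF assms(1) _ assms(3), of e] assms(2) by simp
qed (use assms in auto)

lemma g_up:
  fixes theta y :: "nat \<Rightarrow> real"
  assumes "is_fused_lasso n lam y theta" "2 \<le> i" "i \<le> n" "theta i > theta (i-1)"
  shows "(\<Sum>k=i..n. theta k - y k) \<le> -lam"
proof (rule real_aux_c[where m="real (n-i+1)" and d="theta i - theta (i-1)"])
  fix e :: real
  show "0 \<le> e * (\<Sum>k=i..n. theta k - y k) + real (n-i+1) * e^2/2 + lam * (\<bar>theta i - theta (i-1) + e\<bar> - \<bar>theta i - theta (i-1)\<bar>)"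
    using opt_ineq[OF assms(1) _ assms(3), of e] assms(2) by simp
qed (use assms in auto)

lemma key_id:
  fixes theta y :: "nat \<Rightarrow> real"
  assumes "p \<le> n"
  shows "real (n-p+1) * c - (\<Sum>k=p..n. y k) = (\<Sum>k=p..n. c - theta k) + (\<Sum>k=p..n. theta k - y k)"
  using assms by (simp add: sum_subtractf Suc_diff_le)

lemma avg_le_iff:
  assumes "p \<le> n"
  shows "avg y p n + C * lam / real (n-p+1) \<le> c \<longleftrightarrow> (\<Sum>k=p..n. y k) + C * lam \<le> real (n-p+1) * c"
proof -
  have m: "real (n-p+1) > 0" by simp
  have "avg y p n + C * lam / real (n-p+1) = ((\<Sum>k=p..n. y k) + C * lam) / real (n-p+1)"
    unfolding avg_def by (simp add: add_divide_distrib)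
  then show ?thesis using m by (simp add: pos_divide_le_eq mult.commute)
qed

lemma avg_ge_iff:
  assumes "p \<le> n"
  shows "c \<le> avg y p n - C * lam / real (n-p+1) \<longleftrightarrow> real (n-p+1) * c \<le> (\<Sum>k=p..n. y k) - C * lam"
proof -
  have m: "real (n-p+1) > 0" by simp
  have "avg y p n - C * lam / real (n-p+1) = ((\<Sum>k=p..n. y k) - C * lam) / real (n-p+1)"
    unfolding avg_def by (simp add: diff_divide_distrib)
  then show ?thesis using m by (simp add: pos_le_divide_eq mult.commute)
qed

lemma lower_j:
  fixes theta y :: "nat \<Rightarrow> real"
  assumes opt: "is_fused_lasso n lam y theta" and lam: "lam \<ge> 0" and j: "1 \<le> j" "j \<le> n"
  shows "\<exists>i\<in>{j..n}. avg y i n + Cij i j * lam / real (n - i + 1) \<le> theta n"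
proof -
  define P where "P = {p\<in>{j..n}. \<forall>k\<in>{p..n}. theta k \<le> theta n}"
  have fin: "finite P" and ne: "n \<in> P" using j by (auto simp: P_def)
  define p where "p = Min P"
  have pP: "p \<in> P" using fin ne Min_in unfolding p_def by blast
  then have p: "j \<le> p" "p \<le> n" "\<forall>k\<in>{p..n}. theta k \<le> theta n" by (auto simp: P_def)
  have s0: "0 \<le> (\<Sum>k=p..n. theta n - theta k)" using p(3) by (intro sum_nonneg) auto
  show ?thesis
  proof (cases "p = j")
    case True
    have "-lam \<le> (\<Sum>k=p..n. theta k - y k)" using g_bounds[OF opt lam _ p(2)] j p by auto
    then have "(\<Sum>k=p..n. y k) + Cij p j * lam \<le> real (n-p+1) * theta n"
      using key_id[OF p(2), of "theta n" y theta] s0 True by (simp add: Cij_def)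
    then have "avg y p n + Cij p j * lam / real (n-p+1) \<le> theta n" using avg_le_iff[OF p(2)] by blast
    then show ?thesis using p by (intro bexI[of _ p]) auto
  next
    case False
    have "p - 1 \<notin> P"
    proof
      assume "p - 1 \<in> P"
      then have "p \<le> p - 1" using fin Min_le unfolding p_def by blast
      then show False using False p by simp
    qed
    then obtain k where k: "k \<in> {p-1..n}" "theta k > theta n" using p False by (auto simp: P_def)
    have "k = p - 1"
    proof (rule ccontr)
      assume "k \<noteq> p - 1"
      then have "k \<in> {p..n}" using k by auto
      then show False using k p(3) by force
    qed
    then have "theta p < theta (p-1)" using k p(3) p(2) by force
    then have "lam \<le> (\<Sum>k=p..n. theta k - y k)" using g_down[OF opt _ p(2)] False p j by auto
    then have "(\<Sum>k=p..n. y k) + Cij p j * lam \<le> real (n-p+1) * theta n"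
      using key_id[OF p(2), of "theta n" y theta] s0 False p by (simp add: Cij_def)
    then have "avg y p n + Cij p j * lam / real (n-p+1) \<le> theta n" using avg_le_iff[OF p(2)] by blast
    then show ?thesis using p by (intro bexI[of _ p]) auto
  qed
qed

lemma upper_j:
  fixes theta y :: "nat \<Rightarrow> real"
  assumes opt: "is_fused_lasso n lam y theta" and lam: "lam \<ge> 0" and j: "1 \<le> j" "j \<le> n"
  shows "\<exists>i\<in>{j..n}. theta n \<le> avg y i n - Cij i j * lam / real (n - i + 1)"
proof -
  define P where "P = {p\<in>{j..n}. \<forall>k\<in>{p..n}. theta n \<le> theta k}"
  have fin: "finite P" and ne: "n \<in> P" using j by (auto simp: P_def)
  define p where "p = Min P"
  have pP: "p \<in> P" using fin ne Min_in unfolding p_def by blast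
  then have p: "j \<le> p" "p \<le> n" "\<forall>k\<in>{p..n}. theta n \<le> theta k" by (auto simp: P_def)
  have s0: "(\<Sum>k=p..n. theta n - theta k) \<le> 0" using p(3) by (intro sum_nonpos) auto
  show ?thesis
  proof (cases "p = j")
    case True
    have "(\<Sum>k=p..n. theta k - y k) \<le> lam" using g_bounds[OF opt lam _ p(2)] j p by auto
    then have "real (n-p+1) * theta n \<le> (\<Sum>k=p..n. y k) - Cij p j * lam"
      using key_id[OF p(2), of "theta n" y theta] s0 True by (simp add: Cij_def)
    then have "theta n \<le> avg y p n - Cij p j * lam / real (n-p+1)" using avg_ge_iff[OF p(2)] by blast
    then show ?thesis using p by (intro bexI[of _ p]) auto
  next
    case False
    have "p - 1 \<notin> P"
    proof
      assume "p - 1 \<in> P"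
      then have "p \<le> p - 1" using fin Min_le unfolding p_def by blast
      then show False using False p by simp
    qed
    then obtain k where k: "k \<in> {p-1..n}" "theta k < theta n" using p False by (auto simp: P_def)
    have "k = p - 1"
    proof (rule ccontr)
      assume "k \<noteq> p - 1"
      then have "k \<in> {p..n}" using k by auto
      then show False using k p(3) by force
    qed
    then have "theta p > theta (p-1)" using k p(3) p(2) by force
    then have "(\<Sum>k=p..n. theta k - y k) \<le> -lam" using g_up[OF opt _ p(2)] False p j by auto
    then have "real (n-p+1) * theta n \<le> (\<Sum>k=p..n. y k) - Cij p j * lam"
      using key_id[OF p(2), of "theta n" y theta] s0 False p by (simp add: Cij_def)
    then have "theta n \<le> avg y p n - Cij p j * lam / real (n-p+1)" using avg_ge_iff[OF p(2)] by blast
    then show ?thesis using p by (intro bexI[of _ p]) auto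
  qed
qed

theorem theorem9:
  fixes n :: nat and y theta :: "nat \<Rightarrow> real" and lam :: real
  assumes "n \<ge> 1" and "lam \<ge> 0"
    and "is_fused_lasso n lam y theta"
  shows "(MAX j\<in>{1..n}. MIN i\<in>{j..n}. avg y i n + Cij i j * lam / real (n - i + 1)) \<le> theta n
       \<and> theta n \<le> (MIN j\<in>{1..n}. MAX i\<in>{j..n}. avg y i n - Cij i j * lam / real (n - i + 1))"
proof
  show "(MAX j\<in>{1..n}. MIN i\<in>{j..n}. avg y i n + Cij i j * lam / real (n - i + 1)) \<le> theta n"
    using assms(1) lower_j[OF assms(3,2)] by (auto simp: Max_le_iff Min_le_iff)
  show "theta n \<le> (MIN j\<in>{1..n}. MAX i\<in>{j..n}. avg y i n - Cij i j * lam / real (n - i + 1))"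
    using assms(1) upper_j[OF assms(3,2)] by (auto simp: Min_ge_iff Max_ge_iff)
qed

end
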